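(* Let $T\subset\mathbb{S}^{d-1}$ be a path simplex with vertices $p_1,\dots,p_d$ ordered along its path, and let $g_i$ be the inward facing normal to the facet opposite $p_i$. Then the Gram matrix $G_T^tG_T$, where $G_T=[g_1\,\cdots\,g_d]$, is tridiagonal, i.e. $g_i\cdot g_j=0$ whenever $|i-j|\ge 2$.
   Context: A spherical simplex in $\mathbb{S}^{d-1}\subset\mathbb{R}^d$ with vertices $p_1,\dots,p_d$ (linearly independent unit vectors) is $\mathbb{S}^{d-1}$ intersected with the cone $\{\sum_i\lambda_ip_i:\lambda_i\ge 0\}$; its facet $F_i$ is the face not containing $p_i$, and the inward normal $g_i$ is a vector orthogonal to the span of $\{p_j:j\ne i\}$ with $g_i\cdot p_i>0$. A path simplex is a spherical simplex whose vertices can be ordered $p_1,\dots,p_d$ so that the edges $p_1p_2,\dots,p_{d-1}p_d$ form a path whose edges are mutually at right angles in the following sense: for each $1\le i\le d-1$, the tangent vector $p_i-(p_i\cdot p_{i+1})p_{i+1}$ of the arc $p_ip_{i+1}$ at $p_{i+1}$ is orthogonal to each of $p_{i+1},\dots,p_d$. The endpoints $p_1,p_d$ of the path are its end vertices. *)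

theory Defs
  imports "HOL-Analysis.Analysis"
begin

definition spherical_simplex_vertices :: "(nat \<Rightarrow> 'a::euclidean_space) \<Rightarrow> bool" where
  "spherical_simplex_vertices p \<longleftrightarrow>
     (\<forall>i\<in>{1..DIM('a)}. norm (p i) = 1) \<and>
     inj_on p {1..DIM('a)} \<and>
     independent (p ` {1..DIM('a)})"

definition inward_normal :: "(nat \<Rightarrow> 'a::euclidean_space) \<Rightarrow> nat \<Rightarrow> 'a \<Rightarrow> bool" where
  "inward_normal p i g \<longleftrightarrow>
     (\<forall>v\<in>span (p ` ({1..DIM('a)} - {i})). g \<bullet> v = 0) \<and> g \<bullet> p i > 0"

text \<open>The ordering p 1, ..., p d is a path whose edges are mutually at right angles.\<close>

definition path_ordered :: "(nat \<Rightarrow> 'a::euclidean_space) \<Rightarrow> bool" where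
  "path_ordered p \<longleftrightarrow>
     (\<forall>i. 1 \<le> i \<and> i \<le> DIM('a) - 1 \<longrightarrow>
        (\<forall>k. i + 1 \<le> k \<and> k \<le> DIM('a) \<longrightarrow>
           (p i - (p i \<bullet> p (i + 1)) *\<^sub>R p (i + 1)) \<bullet> p k = 0))"

end

theory Submission
  imports Defs
begin

lemma span_full:
  fixes p :: "nat \<Rightarrow> 'a::euclidean_space"
  assumes "spherical_simplex_vertices p"
  shows "span (p ` {1..DIM('a)}) = UNIV"
proof -
  have ind: "independent (p ` {1..DIM('a)})" and inj: "inj_on p {1..DIM('a)}"
    using assms unfolding spherical_simplex_vertices_def by auto
  have "card (p ` {1..DIM('a)}) = DIM('a)" using inj by (simp add: card_image)
  hence "dim (p ` {1..DIM('a)}) = DIM('a)"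
    using indep_card_eq_dim_span[OF ind] by (simp add: dim_span)
  thus ?thesis using dim_eq_full by blast
qed

lemma main_case:
  fixes p g :: "nat \<Rightarrow> 'a::euclidean_space"
  assumes S: "spherical_simplex_vertices p"
    and P: "path_ordered p"
    and N: "\<forall>i\<in>{1..DIM('a)}. inward_normal p i (g i)"
    and i: "i \<in> {1..DIM('a)}" and j: "j \<in> {1..DIM('a)}"
    and ij: "i + 2 \<le> j"
  shows "g i \<bullet> g j = 0"
proof -
  define d where "d = DIM('a)"
  define I where "I = {1..d}"
  define c where "c k = p k \<bullet> p (k + 1)" for k
  define t where "t k = p k - c k *\<^sub>R p (k + 1)" for k
  have unit: "p k \<bullet> p k = 1" if "k \<in> I" for k
    using S that unfolding spherical_simplex_vertices_def I_def d_def
    by (metis inner_commute norm_eq_1)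
  have inj: "inj_on p I" and ind: "independent (p ` I)"
    using S unfolding spherical_simplex_vertices_def I_def d_def by auto
  have F1: "t k \<bullet> p m = 0" if "1 \<le> k" "k \<le> d - 1" "k + 1 \<le> m" "m \<le> d" for k m
    using P that unfolding path_ordered_def t_def c_def d_def by blast
  have F2: "p m \<bullet> p (k + 1) = c k * (p m \<bullet> p k)" if "1 \<le> m" "m \<le> k" "k + 1 \<le> d" for m k
    using that
  proof (induction "k - m" arbitrary: m)
    case 0
    then have "m = k" by simp
    then show ?case using unit[of k] 0 by (simp add: c_def I_def)
  next
    case (Suc n)
    have a: "p m \<bullet> p q = c m * (p (m + 1) \<bullet> p q)" if "m + 1 \<le> q" "q \<le> d" for q
      using F1[of m q] Suc.prems that unfolding t_def
      by (simp add: inner_diff_left algebra_simps)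
    have "p (m + 1) \<bullet> p (k + 1) = c k * (p (m + 1) \<bullet> p k)"
      using Suc by simp
    then show ?case using a[of "k + 1"] a[of k] Suc.prems Suc.hyps by simp
  qed
  have F3: "t k \<bullet> p m = (1 - (c k)^2) * (p m \<bullet> p k)" if "1 \<le> m" "m \<le> k" "k + 1 \<le> d" for m k
    using F2[OF that] unfolding t_def
    by (simp add: inner_diff_left inner_commute power2_eq_square algebra_simps)
  have tne: "t k \<noteq> 0" if "1 \<le> k" "k + 1 \<le> d" for k
  proof
    assume "t k = 0"
    hence eq: "p k = c k *\<^sub>R p (k + 1)" unfolding t_def by simp
    have "p (k + 1) \<in> p ` I - {p k}" using inj that unfolding I_def
      by (auto dest: inj_onD)
    hence "p k \<in> span (p ` I - {p k})" using eq by (simp add: span_base span_scale)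
    moreover have "p k \<in> p ` I" using that unfolding I_def by auto
    ultimately show False using ind dependent_def by blast
  qed
  have F4: "1 - (c k)^2 > 0" if "1 \<le> k" "k + 1 \<le> d" for k
  proof -
    have "t k \<bullet> t k = t k \<bullet> p k - c k * (t k \<bullet> p (k + 1))"
      unfolding t_def[of k] by (simp add: inner_diff_right inner_commute algebra_simps)
    also have "\<dots> = 1 - (c k)^2"
      using F3[of k k] F1[of k "k+1"] that unit[of k] unfolding I_def by simp
    finally show ?thesis using tne[OF that] by (metis inner_gt_zero_iff)
  qed
  have id: "i + 1 \<le> d - 1" "1 \<le> i" "j \<le> d" using i j ij unfolding d_def by auto
  obtain v where vo: "\<And>m. m \<in> I - {i} \<Longrightarrow> v \<bullet> p m = 0" and vi: "v \<bullet> p i \<noteq> 0"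
    and vs: "v \<in> span (p ` (I - {j}))"
  proof (cases "i = 1")
    case True
    have "p 1 \<in> span (p ` (I - {j}))" "p 2 \<in> span (p ` (I - {j}))"
      using id ij True unfolding I_def by (auto intro!: span_base)
    hence "t 1 \<in> span (p ` (I - {j}))" unfolding t_def
      by (metis one_add_one span_diff span_scale)
    moreover have "t 1 \<bullet> p m = 0" if "m \<in> I - {i}" for m
      using F1[of 1 m] that True id unfolding I_def by auto
    moreover have "t 1 \<bullet> p i \<noteq> 0" using F3[of 1 1] F4[of 1] True id unit[of 1]
      unfolding I_def by fastforce
    ultimately show ?thesis using that True by blast
  next
    case False
    have i2: "2 \<le> i" using False id by simp
    define v where "v = (1 - (c (i-1))^2) *\<^sub>R t i - (c (i-1) * (1 - (c i)^2)) *\<^sub>R t (i-1)"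
    have "p (i-1) \<in> span (p ` (I - {j}))" "p i \<in> span (p ` (I - {j}))"
      "p (i+1) \<in> span (p ` (I - {j}))"
      using id ij False unfolding I_def by (auto intro!: span_base imageI)
    hence "v \<in> span (p ` (I - {j}))" unfolding v_def t_def using False id
      by (simp add: span_diff span_scale)
    moreover have "v \<bullet> p m = 0" if "m \<in> I - {i}" for m
    proof (cases "m < i")
      case True
      have ii: "i - 1 + 1 = i" using id by simp
      have "p m \<bullet> p i = c (i - 1) * (p m \<bullet> p (i - 1))"
        using F2[of m "i-1"] True that id unfolding I_def ii by auto
      moreover have "t i \<bullet> p m = (1 - (c i)^2) * (p m \<bullet> p i)"
        using F3[of m i] True that id unfolding I_def by auto
      moreover have "t (i-1) \<bullet> p m = (1 - (c (i-1))^2) * (p m \<bullet> p (i-1))"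
        using F3[of m "i-1"] True that id False unfolding I_def by auto
      moreover have "v \<bullet> p m = (1 - (c (i-1))^2) * (t i \<bullet> p m) - (c (i-1) * (1 - (c i)^2)) * (t (i-1) \<bullet> p m)"
        unfolding v_def by (simp add: inner_diff_left)
      ultimately show ?thesis
      proof -
        assume h1: "p m \<bullet> p i = c (i - 1) * (p m \<bullet> p (i - 1))"
          and h2: "t i \<bullet> p m = (1 - (c i)^2) * (p m \<bullet> p i)"
          and h3: "t (i-1) \<bullet> p m = (1 - (c (i-1))^2) * (p m \<bullet> p (i-1))"
          and h4: "v \<bullet> p m = (1 - (c (i-1))^2) * (t i \<bullet> p m) - (c (i-1) * (1 - (c i)^2)) * (t (i-1) \<bullet> p m)"
        show ?thesis unfolding h4 h3 h2 h1 by (simp add: algebra_simps)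
      qed
    next
      case False
      hence "m \<ge> i + 1" using that by auto
      then show ?thesis using F1[of i m] F1[of "i-1" m] that id i2
        unfolding v_def I_def by (simp add: inner_diff_left)
    qed
    moreover have "v \<bullet> p i \<noteq> 0"
    proof -
      have "v \<bullet> p i = (1 - (c (i-1))^2) * (1 - (c i)^2)"
        using F3[of i i] F1[of "i-1" i] unit[of i] id False
        unfolding v_def I_def by (simp add: inner_diff_left)
      moreover have "1 - (c (i-1))^2 > 0" "1 - (c i)^2 > 0" using F4[of "i-1"] F4[of i] id False by auto
      ultimately show ?thesis by simp
    qed
    ultimately show ?thesis using that by blast
  qed
  have gjv: "g j \<bullet> v = 0" using N j vs unfolding inward_normal_def I_def d_def by blast
  have ins: "p ` I = insert (p i) (p ` (I - {i}))" using i unfolding I_def d_def by auto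
  have "g j \<in> span (p ` I)" using span_full[OF S] unfolding I_def d_def by simp
  then obtain a where w: "g j - a *\<^sub>R p i \<in> span (p ` (I - {i}))"
    unfolding ins span_breakdown_eq by blast
  define w where "w = g j - a *\<^sub>R p i"
  have vw: "v \<bullet> w = 0"
    using orthogonal_to_span[OF w[folded w_def], of v] vo unfolding orthogonal_def by auto
  have giw: "g i \<bullet> w = 0" using N i w unfolding inward_normal_def I_def d_def w_def by blast
  have gj: "g j = w + a *\<^sub>R p i" unfolding w_def by simp
  have "0 = v \<bullet> g j" using gjv by (simp add: inner_commute)
  also have "\<dots> = a * (v \<bullet> p i)" unfolding gj using vw by (simp add: inner_add_right)
  finally have "a = 0" using vi by simp
  thus ?thesis unfolding gj using giw by (simp add: inner_add_right)
qed

theorem claim4p3: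
  fixes p g :: "nat \<Rightarrow> 'a::euclidean_space"
  assumes "spherical_simplex_vertices p"
    and "path_ordered p"
    and "\<forall>i\<in>{1..DIM('a)}. inward_normal p i (g i)"
    and "i \<in> {1..DIM('a)}" and "j \<in> {1..DIM('a)}"
    and "i + 2 \<le> j \<or> j + 2 \<le> i"
  shows "g i \<bullet> g j = 0"
  using assms(6)
proof
  assume "i + 2 \<le> j" thus ?thesis using main_case assms by blast
next
  assume "j + 2 \<le> i" thus ?thesis using main_case[of p g j i] assms by (simp add: inner_commute)
qed

end
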